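(* Let robots $i$ and $j$ be neighbors. Let $\Theta_{ij}\in\mathbb{R}^7$ be the unknown constant parameter vector described in the context, and let the estimate $\hat\Theta_{ij}$ be generated by the concurrent-learning update described in the context, starting from an arbitrary initial estimate $\hat\Theta_{ij}(t_0)\in\mathbb{R}^7$. Assume that the recorded data matrix $S_{ij}=\mathbf{R}_{ij}\mathbf{R}_{ij}^T\in\mathbb{R}^{7\times 7}$ is full rank. Then the estimation error $\tilde\Theta_{ij}(t_k)=\hat\Theta_{ij}(t_k)-\Theta_{ij}$ is globally exponentially stable: there exist constants $c\ge 1$ and $\rho\in(0,1)$, independent of $\hat\Theta_{ij}(t_0)$, such that $\|\tilde\Theta_{ij}(t_k)\|\le c\,\rho^k\|\tilde\Theta_{ij}(t_0)\|$ for all $k\in\mathbb{N}$.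
   Context: Setting: nonholonomic robots, each with its own odometry frame $\mathcal{O}_i$ (with $x$-axis equal to the robot's initial heading), moving with 4-DoF kinematics (planar position, height, yaw). At sampling instants $t_k=k\Delta t$, $k\in\mathbb{N}$, robot $i$ measures with UWB the distance $d_{ij}(t_k)=\|\mathbf{p}^{\mathcal{O}_i}_i(t_k)-\mathbf{p}^{\mathcal{O}_i}_j(t_k)\|$ to its neighbor $j$, and both robots know their own inertial-odometry displacements $\mathbf{p}^{\mathcal{O}_i}_i(t_k)$, $\mathbf{p}^{\mathcal{O}_j}_j(t_k)$ (exchanged by communication). Using the cosine theorem on two consecutive samples, these measurements yield at each $t_k$ a scalar $y_{ij}(t_k)$ and a unit vector $\Phi_{ij}(t_k)=\Psi_{ij}(t_k)/\|\Psi_{ij}(t_k)\|\in\mathbb{R}^7$ (with $\Psi_{ij}(t_k)\neq 0$ a vector computed from the measured displacements) satisfying the linear regression $y_{ij}(t_k)=\Theta_{ij}^T\Phi_{ij}(t_k)$, where $\Theta_{ij}\in\mathbb{R}^7$ is a constant unknown vector whose first three entries are the initial relative position $\mathbf{p}^{\mathcal{O}_i}_{ij}(t_0)$ of the robots in frame $\mathcal{O}_i$ and whose 6th and 7th entries are $\cos\theta$ and $\sin\theta$, $\theta$ being the initial relative yaw between frames $\mathcal{O}_j$ and $\mathcal{O}_i$. Recorded data: a finite set of previously sampled unit regressors $\Phi_{ij}(s_1),\dots,\Phi_{ij}(s_\varsigma)$ with corresponding outputs $y_{ij}(s_m)=\Theta_{ij}^T\Phi_{ij}(s_m)$; $\mathbf{R}_{ij}=[\Phi_{ij}(s_1),\dots,\Phi_{ij}(s_\varsigma)]$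 and $S_{ij}=\mathbf{R}_{ij}\mathbf{R}_{ij}^T$. Also $U_{ij}(t_k)=\Phi_{ij}(t_k)\Phi_{ij}(t_k)^T$. Estimator: $\hat\Theta_{ij}(t)=\hat\Theta_{ij}(t_k)$ for $t_k<t\le t_{k+1}$ and $\hat\Theta_{ij}(t_{k+1})=\hat\Theta_{ij}(t_k)-\eta\sum_{m=1}^{\varsigma}\Phi_{ij}(s_m)\epsilon_{ij}(s_m)-\eta\,\Phi_{ij}(t_k)\epsilon_{ij}(t_k)$, where the innovations are $\epsilon_{ij}(s)=\hat\Theta_{ij}(t_k)^T\Phi_{ij}(s)-y_{ij}(s)$ and the learning rate is $\eta=\dfrac{\lambda_{\min}(S_{ij})}{\lambda_{\max}(U_{ij}(t_k))+\lambda_{\max}(S_{ij})^2}$ ($\lambda_{\min},\lambda_{\max}$ denote smallest/largest eigenvalues). *)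

theory Defs
  imports "HOL-Analysis.Analysis"
begin

definition outer :: "real^'n \<Rightarrow> real^'n \<Rightarrow> real^'n^'n" where
  "outer u v = (\<chi> i j. u $ i * v $ j)"

text \<open>Real eigenvalues of a square matrix (all eigenvalues are real for the symmetric
  matrices used here).\<close>
definition real_eigenvalues :: "real^'n^'n \<Rightarrow> real set" where
  "real_eigenvalues A = {l. \<exists>v. v \<noteq> 0 \<and> A *v v = l *\<^sub>R v}"

definition lambda_min :: "real^'n^'n \<Rightarrow> real" where
  "lambda_min A = Min (real_eigenvalues A)"

definition lambda_max :: "real^'n^'n \<Rightarrow> real" where
  "lambda_max A = Max (real_eigenvalues A)"

text \<open>Recorded-data matrix S = R R^T = sum over recorded unit regressors Phi(s_m), m = 1..sigma.\<close>
definition data_matrix :: "(nat \<Rightarrow> real^'n) \<Rightarrow> nat \<Rightarrow> real^'n^'n" where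
  "data_matrix Phir \<sigma> = (\<Sum>m = 1..\<sigma>. outer (Phir m) (Phir m))"

definition learning_rate :: "real^'n^'n \<Rightarrow> real^'n \<Rightarrow> real" where
  "learning_rate S phi = lambda_min S / (lambda_max (outer phi phi) + (lambda_max S)^2)"

definition cl_step :: "(nat \<Rightarrow> real^'n) \<Rightarrow> (nat \<Rightarrow> real) \<Rightarrow> nat \<Rightarrow> real^'n \<Rightarrow> real \<Rightarrow> real^'n \<Rightarrow> real^'n" where
  "cl_step Phir yr \<sigma> phi y Th =
     (let \<eta> = learning_rate (data_matrix Phir \<sigma>) phi in
      Th - \<eta> *\<^sub>R (\<Sum>m = 1..\<sigma>. (Th \<bullet> Phir m - yr m) *\<^sub>R Phir m)
         - \<eta> *\<^sub>R ((Th \<bullet> phi - y) *\<^sub>R phi))"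

end

theory Submission
  imports Defs
begin


lemma eig_min_exists:
  fixes A :: "real^'n^'n"
  assumes sym: "\<And>x y. (A *v x) \<bullet> y = x \<bullet> (A *v y)"
  shows "\<exists>l v. v \<noteq> 0 \<and> A *v v = l *\<^sub>R v \<and> (\<forall>x. l * (norm x)^2 \<le> x \<bullet> (A *v x))"
proof -
  define f where "f x = x \<bullet> (A *v x)" for x :: "real^'n"
  have cont: "continuous_on (sphere 0 1) f"
    unfolding f_def by (intro continuous_intros linear_continuous_on) (auto intro: linear_linear)
  have ne: "sphere (0::real^'n) 1 \<noteq> {}" by simp
  obtain v where v: "v \<in> sphere 0 1" and vmin: "\<And>y. y \<in> sphere 0 1 \<Longrightarrow> f v \<le> f y"
    using continuous_attains_inf[OF compact_sphere ne cont] by blast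
  define l where "l = f v"
  have nv: "norm v = 1" using v by simp
  have lb: "l * (norm x)^2 \<le> f x" for x
  proof (cases "x = 0")
    case True then show ?thesis by (simp add: f_def)
  next
    case False
    define u where "u = (1 / norm x) *\<^sub>R x"
    have "u \<in> sphere 0 1" using False by (simp add: u_def)
    then have "l \<le> f u" using vmin l_def by simp
    also have "f u = f x / (norm x)^2"
      by (simp add: u_def f_def matrix_vector_mult_scaleR power2_eq_square)
    finally show ?thesis using False by (simp add: field_simps)
  qed
  define g where "g x = f x - l * (norm x)^2" for x
  have g0: "\<And>x. 0 \<le> g x" using lb by (simp add: g_def)
  define w where "w = A *v v - l *\<^sub>R v"
  have gv: "g v = 0" using nv by (simp add: g_def l_def)
  have exp: "g (v + t *\<^sub>R w) = 2 * t * (w \<bullet> w) + t^2 * g w" for t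
  proof -
    have s: "v \<bullet> (A *v w) = w \<bullet> (A *v v)" using sym[of w v] by (simp add: inner_commute)
    have nn: "norm (v + t *\<^sub>R w) * norm (v + t *\<^sub>R w) = norm v * norm v + t * (v \<bullet> w * 2) + t * (t * (norm w * norm w))"
    proof -
      have "(norm (v + t *\<^sub>R w))^2 = (norm v)^2 + t * (v \<bullet> w * 2) + t * (t * (norm w)^2)"
        unfolding power2_norm_eq_inner by (simp add: inner_add_left inner_add_right inner_commute[of w v] algebra_simps)
      then show ?thesis by (simp add: power2_eq_square)
    qed
    have "g (v + t *\<^sub>R w) = g v + 2 * t * (w \<bullet> (A *v v) - l * (v \<bullet> w)) + t^2 * g w"
      unfolding g_def f_def
      by (simp add: matrix_vector_right_distrib matrix_vector_mult_scaleR inner_add_left inner_add_right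
          s nn inner_commute[of w v] algebra_simps power2_eq_square)
    also have "w \<bullet> (A *v v) - l * (v \<bullet> w) = w \<bullet> w"
      by (simp add: w_def inner_diff_left inner_diff_right inner_commute algebra_simps)
    finally show ?thesis using gv by simp
  qed
  have "w \<bullet> w = 0"
  proof (rule ccontr)
    assume "w \<bullet> w \<noteq> 0"
    then have n: "w \<bullet> w > 0" by (simp add: order_le_neq_trans[OF inner_ge_zero] )
    define c where "c = g w"
    have c: "c \<ge> 0" using g0 c_def by simp
    define t where "t = - (w \<bullet> w) / (c + 1)"
    have "0 \<le> 2 * t * (w \<bullet> w) + t^2 * c" using g0[of "v + t *\<^sub>R w"] exp[of t] c_def by simp
    also have "2 * t * (w \<bullet> w) + t^2 * c = (w \<bullet> w)^2 * (- c - 2) / (c+1)^2"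
    proof -
      have c1: "c + 1 \<noteq> 0" "1 + c \<noteq> 0" using c by auto
      have tc: "t * (c + 1) = - (w \<bullet> w)" unfolding t_def using c1 by simp
      have "(2 * t * (w \<bullet> w) + t^2 * c) * (c+1)^2 = 2 * (w \<bullet> w) * (t * (c+1)) * (c+1) + c * (t * (c+1))^2"
        by (simp add: algebra_simps power2_eq_square)
      also have "\<dots> = (w \<bullet> w)^2 * (- c - 2)" unfolding tc by (simp add: algebra_simps power2_eq_square)
      finally show ?thesis using c1 by (simp add: eq_divide_eq)
    qed
    also have "\<dots> < 0" using n c by (intro divide_neg_pos mult_pos_neg) auto
    finally show False by simp
  qed
  then have "A *v v = l *\<^sub>R v" by (simp add: w_def)
  moreover have "v \<noteq> 0" using nv by auto
  ultimately show ?thesis using lb unfolding f_def by blast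
qed

lemma eig_finite:
  fixes A :: "real^'n^'n"
  assumes sym: "\<And>x y. (A *v x) \<bullet> y = x \<bullet> (A *v y)"
  shows "finite (real_eigenvalues A)"
proof -
  define E where "E = real_eigenvalues A"
  define f where "f l = (SOME v. v \<noteq> 0 \<and> A *v v = l *\<^sub>R v)" for l
  have fE: "f l \<noteq> 0 \<and> A *v f l = l *\<^sub>R f l" if "l \<in> E" for l
    using someI_ex[of "\<lambda>v. v \<noteq> 0 \<and> A *v v = l *\<^sub>R v"] that unfolding E_def real_eigenvalues_def f_def by blast
  have orth: "f l \<bullet> f l' = 0" if "l \<in> E" "l' \<in> E" "l \<noteq> l'" for l l'
  proof -
    have "(A *v f l) \<bullet> f l' = f l \<bullet> (A *v f l')" by (rule sym)
    then have "l * (f l \<bullet> f l') = l' * (f l \<bullet> f l')" using fE[OF that(1)] fE[OF that(2)] by simp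
    then show ?thesis using that(3) by simp
  qed
  have inj: "inj_on f E"
  proof (rule inj_onI)
    fix l l' assume "l \<in> E" "l' \<in> E" "f l = f l'"
    then show "l = l'" using orth fE by fastforce
  qed
  have "independent (f ` E)"
    by (rule pairwise_orthogonal_independent) (auto simp: pairwise_def orthogonal_def fE intro!: orth)
  then have "finite (f ` E)" by (rule finiteI_independent)
  then show ?thesis using inj finite_image_iff E_def by blast
qed

lemma eig_min:
  fixes A :: "real^'n^'n"
  assumes sym: "\<And>x y. (A *v x) \<bullet> y = x \<bullet> (A *v y)"
  shows "lambda_min A \<in> real_eigenvalues A" "\<And>x. lambda_min A * (norm x)^2 \<le> x \<bullet> (A *v x)"
proof -
  obtain l v where v: "v \<noteq> 0" "A *v v = l *\<^sub>R v" and lb: "\<And>x. l * (norm x)^2 \<le> x \<bullet> (A *v x)"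
    using eig_min_exists[OF sym] by blast
  have lE: "l \<in> real_eigenvalues A" using v unfolding real_eigenvalues_def by blast
  have "l \<le> l'" if l'E: "l' \<in> real_eigenvalues A" for l'
  proof -
    obtain w where w: "w \<noteq> 0" "A *v w = l' *\<^sub>R w" using l'E unfolding real_eigenvalues_def by blast
    have e: "w \<bullet> (A *v w) = l' * (norm w)^2" using w(2) by (simp add: power2_norm_eq_inner)
    have "l * (norm w)^2 \<le> l' * (norm w)^2" using lb[of w] e by linarith
    moreover have "(norm w)^2 > 0" using w(1) by simp
    ultimately show ?thesis by (rule mult_right_le_imp_le)
  qed
  then have "lambda_min A = l" unfolding lambda_min_def
    using eig_finite[OF sym] lE by (intro Min_eqI) auto
  then show "lambda_min A \<in> real_eigenvalues A" "\<And>x. lambda_min A * (norm x)^2 \<le> x \<bullet> (A *v x)"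
    using lE lb by auto
qed

lemma neg_mv: "(- A) *v x = - (A *v (x::real^'n))" for A :: "real^'n^'m"
  by (simp add: vec_eq_iff matrix_vector_mult_def sum_negf)

lemma eig_max:
  fixes A :: "real^'n^'n"
  assumes sym: "\<And>x y. (A *v x) \<bullet> y = x \<bullet> (A *v y)"
  shows "lambda_max A \<in> real_eigenvalues A" "\<And>x. x \<bullet> (A *v x) \<le> lambda_max A * (norm x)^2"
proof -
  have sym': "\<And>x y. ((-A) *v x) \<bullet> y = x \<bullet> ((-A) *v y)" using sym by (simp only: neg_mv inner_minus_right inner_minus_left)
  obtain l v where v: "v \<noteq> 0" "(-A) *v v = l *\<^sub>R v" and lb: "\<And>x. l * (norm x)^2 \<le> x \<bullet> ((-A) *v x)"
    using eig_min_exists[OF sym'] by blast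
  have v2: "- (A *v v) = l *\<^sub>R v" using v(2) by (simp only: neg_mv)
  have v': "A *v v = (-l) *\<^sub>R v"
  proof -
    have "A *v v = - (- (A *v v))" by simp
    also have "\<dots> = (-l) *\<^sub>R v" unfolding v2 by simp
    finally show ?thesis .
  qed
  have lE: "-l \<in> real_eigenvalues A" using v v' unfolding real_eigenvalues_def by blast
  have ub: "x \<bullet> (A *v x) \<le> (-l) * (norm x)^2" for x using lb[of x] by (simp only: neg_mv inner_minus_right)
  have "l' \<le> -l" if l'E: "l' \<in> real_eigenvalues A" for l'
  proof -
    obtain w where w: "w \<noteq> 0" "A *v w = l' *\<^sub>R w" using l'E unfolding real_eigenvalues_def by blast
    have e: "w \<bullet> (A *v w) = l' * (norm w)^2" using w(2) by (simp add: power2_norm_eq_inner)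
    have "l' * (norm w)^2 \<le> (-l) * (norm w)^2" using ub[of w] e by linarith
    moreover have "(norm w)^2 > 0" using w(1) by simp
    ultimately show ?thesis by (rule mult_right_le_imp_le)
  qed
  then have "lambda_max A = -l" unfolding lambda_max_def
    using eig_finite[OF sym] lE by (intro Max_eqI) auto
  then show "lambda_max A \<in> real_eigenvalues A" "\<And>x. x \<bullet> (A *v x) \<le> lambda_max A * (norm x)^2"
    using lE ub by auto
qed

lemma sym_opnorm:
  fixes N :: "real^'n \<Rightarrow> real^'n"
  assumes lin: "linear N" and sym: "\<And>x y. x \<bullet> N y = y \<bullet> N x"
    and q: "\<And>x. \<bar>x \<bullet> N x\<bar> \<le> \<rho> * (norm x)^2"
  shows "norm (N x) \<le> \<rho> * norm x"
proof (cases "N x = 0")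
  case True
  have "0 \<le> \<rho> * (norm x)^2" using q[of x] by linarith
  then show ?thesis using True
    by (cases "x = 0") (auto simp: zero_le_mult_iff)
next
  case False
  define z where "z = N x"
  have x0: "x \<noteq> 0" using False lin linear_0 by blast
  define p where "p = norm z *\<^sub>R x"
  define r where "r = norm x *\<^sub>R z"
  have key: "4 * (p \<bullet> N r) = (p + r) \<bullet> N (p + r) - (p - r) \<bullet> N (p - r)"
    using sym[of p r] by (simp add: linear_add[OF lin] linear_diff[OF lin] inner_add_left inner_add_right
        inner_diff_left inner_diff_right algebra_simps)
  have pr: "p \<bullet> N r = norm z * norm x * (norm z)^2"
  proof -
    have "x \<bullet> N z = z \<bullet> z" using sym[of x z] z_def by simp
    then show ?thesis unfolding p_def r_def by (simp add: linear_scale[OF lin] power2_norm_eq_inner)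
  qed
  have "(p + r) \<bullet> N (p + r) - (p - r) \<bullet> N (p - r) \<le> \<rho> * (norm (p + r))^2 + \<rho> * (norm (p - r))^2"
    using q[of "p + r"] q[of "p - r"] by linarith
  also have "\<dots> = 2 * \<rho> * ((norm p)^2 + (norm r)^2)"
    unfolding power2_norm_eq_inner by (simp add: inner_add_left inner_add_right inner_diff_left inner_diff_right inner_commute[of r p] algebra_simps)
  also have "\<dots> = 4 * \<rho> * (norm z)^2 * (norm x)^2"
    by (simp add: p_def r_def power_mult_distrib)
  finally have "4 * (norm z * norm x * (norm z)^2) \<le> 4 * \<rho> * (norm z)^2 * (norm x)^2"
    using key pr by simp
  then have "(norm z * norm x * norm z) * norm z \<le> (norm z * norm x * norm z) * (\<rho> * norm x)"
    by (simp add: power2_eq_square algebra_simps)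
  moreover have "norm z * norm x * norm z > 0" using x0 False z_def by simp
  ultimately have "norm z \<le> \<rho> * norm x" by (simp add: mult_le_cancel_left_pos)
  then show ?thesis using z_def by simp
qed



lemma outer_mv: "outer u v *v x = (v \<bullet> x) *\<^sub>R u" for u v x :: "real^'n"
  by (simp add: vec_eq_iff outer_def matrix_vector_mult_def inner_vec_def sum_distrib_left sum_distrib_right mult.assoc mult.commute mult.left_commute)

lemma data_mv: "data_matrix P \<sigma> *v x = (\<Sum>m=1..\<sigma>. (P m \<bullet> x) *\<^sub>R P m)" for x :: "real^'n"
proof -
  have "data_matrix P \<sigma> *v x = (\<Sum>m=1..\<sigma>. outer (P m) (P m) *v x)"
    unfolding data_matrix_def
    by (induction \<sigma>) (simp_all add: matrix_vector_mult_def vec_eq_iff sum.distrib ring_distribs)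
  then show ?thesis by (simp add: outer_mv)
qed


lemma outer_sym: "(outer u u *v x) \<bullet> y = x \<bullet> (outer u u *v y)" for u x y :: "real^'n"
  by (simp add: outer_mv inner_commute)

lemma data_sym: "(data_matrix P \<sigma> *v x) \<bullet> y = x \<bullet> (data_matrix P \<sigma> *v y)" for x y :: "real^'n"
  by (simp add: data_mv inner_sum_left inner_sum_right inner_commute mult.commute)

lemma data_quad: "x \<bullet> (data_matrix P \<sigma> *v x) = (\<Sum>m=1..\<sigma>. (P m \<bullet> x)^2)" for x :: "real^'n"
  by (simp add: data_mv inner_sum_right inner_commute power2_eq_square)

lemma outer_lmax: assumes "norm (u::real^'n) = 1" shows "lambda_max (outer u u) = 1"
proof -
  have m1: "lambda_max (outer u u) \<in> real_eigenvalues (outer u u)"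
   and m2: "\<And>x. x \<bullet> (outer u u *v x) \<le> lambda_max (outer u u) * (norm x)^2"
    using eig_max[OF outer_sym] by blast+
  have uu: "u \<bullet> u = 1"
  proof -
    have "u \<bullet> u = (norm u)^2" by (simp add: power2_norm_eq_inner)
    then show ?thesis using assms by simp
  qed
  have "1 \<le> lambda_max (outer u u)" using m2[of u] assms by (simp add: outer_mv uu)
  moreover have "lambda_max (outer u u) \<le> 1"
  proof -
    obtain w where w: "w \<noteq> 0" "outer u u *v w = lambda_max (outer u u) *\<^sub>R w"
      using m1 unfolding real_eigenvalues_def by blast
    have "lambda_max (outer u u) * (norm w)^2 = w \<bullet> (outer u u *v w)"
      using w(2) by (simp add: power2_norm_eq_inner)
    also have "\<dots> = (u \<bullet> w)^2" by (simp add: outer_mv power2_eq_square inner_commute)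
    also have "\<dots> \<le> (norm u * norm w)^2"
    proof -
      have "\<bar>u \<bullet> w\<bar> \<le> norm u * norm w" by (rule Cauchy_Schwarz_ineq2)
      from power_mono[OF this abs_ge_zero, of 2] show ?thesis by simp
    qed
    also have "\<dots> = 1 * (norm w)^2" using assms by simp
    finally have "lambda_max (outer u u) * (norm w)^2 \<le> 1 * (norm w)^2" .
    moreover have "(norm w)^2 > 0" using w(1) by simp
    ultimately show ?thesis by (rule mult_right_le_imp_le)
  qed
  ultimately show ?thesis by simp
qed

theorem theorem1:
  fixes \<Theta> :: "real^7"
    and Phir :: "nat \<Rightarrow> real^7" and yr :: "nat \<Rightarrow> real" and \<sigma> :: nat
    and Phi :: "nat \<Rightarrow> real^7" and y :: "nat \<Rightarrow> real"
  assumes rec_unit: "\<And>m. m \<in> {1..\<sigma>} \<Longrightarrow> norm (Phir m) = 1"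
    and rec_out: "\<And>m. m \<in> {1..\<sigma>} \<Longrightarrow> yr m = \<Theta> \<bullet> Phir m"
    and cur_unit: "\<And>k. norm (Phi k) = 1"
    and cur_out: "\<And>k. y k = \<Theta> \<bullet> Phi k"
    and full_rank: "rank (data_matrix Phir \<sigma>) = 7"
  shows "\<exists>c \<rho>. c \<ge> 1 \<and> 0 < \<rho> \<and> \<rho> < 1 \<and>
           (\<forall>Th :: nat \<Rightarrow> real^7.
              (\<forall>k. Th (Suc k) = cl_step Phir yr \<sigma> (Phi k) (y k) (Th k)) \<longrightarrow>
              (\<forall>k. norm (Th k - \<Theta>) \<le> c * \<rho> ^ k * norm (Th 0 - \<Theta>)))"
proof -
  define S where "S = data_matrix Phir \<sigma>"
  define a where "a = lambda_min S"
  define b where "b = lambda_max S"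
  have aE: "a \<in> real_eigenvalues S" and alb: "\<And>x. a * (norm x)^2 \<le> x \<bullet> (S *v x)"
    unfolding a_def S_def using eig_min[OF data_sym] by blast+
  have bub: "\<And>x. x \<bullet> (S *v x) \<le> b * (norm x)^2"
    unfolding b_def S_def using eig_max[OF data_sym] by blast+
  have inj: "inj ((*v) S)" using full_rank full_rank_injective[of "data_matrix Phir \<sigma>"] unfolding S_def by simp
  have apos: "a > 0"
  proof -
    obtain v where v: "v \<noteq> 0" "S *v v = a *\<^sub>R v" using aE unfolding real_eigenvalues_def by blast
    have "a * (norm v)^2 = v \<bullet> (S *v v)" using v(2) by (simp add: power2_norm_eq_inner)
    also have "\<dots> \<ge> 0" unfolding S_def data_quad by (intro sum_nonneg) auto
    finally have "a * (norm v)^2 \<ge> 0" .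
    then have "a \<ge> 0" using v(1) by (simp add: zero_le_mult_iff)
    moreover have "a \<noteq> 0"
    proof
      assume "a = 0"
      then have "S *v v = S *v 0" using v(2) by simp
      then show False using inj v(1) by (meson injD)
    qed
    ultimately show ?thesis by simp
  qed
  have ab: "a \<le> b"
  proof -
    have "a * (norm (axis 1 1 :: real^7))^2 \<le> b * (norm (axis 1 1 :: real^7))^2"
      using alb[of "axis 1 1"] bub[of "axis 1 1"] by linarith
    then show ?thesis by simp
  qed
  define \<eta> where "\<eta> = a / (1 + b^2)"
  have lr: "learning_rate S (Phi k) = \<eta>" for k
    unfolding learning_rate_def \<eta>_def a_def b_def using outer_lmax[OF cur_unit] by simp
  have etapos: "\<eta> > 0" unfolding \<eta>_def using apos by (simp add: add_pos_nonneg)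
  define \<rho> where "\<rho> = max (1 - \<eta> * a) (\<eta> * (b + 1) - 1)"
  have r1: "\<eta> * a < 1"
  proof -
    have "a * a \<le> b * b" using ab apos by (intro mult_mono) auto
    then have "a * a < 1 + b^2" by (simp add: power2_eq_square)
    then show ?thesis unfolding \<eta>_def using apos by (simp add: field_simps add_pos_nonneg power2_eq_square)
  qed
  have r2: "\<eta> * (b + 1) < 2"
  proof -
    have bpos: "b > 0" using ab apos by simp
    have "a * (b + 1) \<le> b * (b + 1)" using ab bpos by (intro mult_right_mono) auto
    also have "\<dots> < 2 * (1 + b^2)"
    proof -
      have "0 < (b - 1/2)^2 + 7/4" by (simp add: add_nonneg_pos)
      then show ?thesis by (simp add: power2_eq_square algebra_simps)
    qed
    finally show ?thesis unfolding \<eta>_def by (simp add: field_simps add_pos_nonneg)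
  qed
  have rpos: "0 < \<rho>" unfolding \<rho>_def using r1 by simp
  have rlt: "\<rho> < 1" unfolding \<rho>_def using r1 r2 etapos apos by simp
  define N where "N k x = x - \<eta> *\<^sub>R (S *v x) - \<eta> *\<^sub>R ((Phi k \<bullet> x) *\<^sub>R Phi k)" for k x
  have Nlin: "linear (N k)" for k
    unfolding N_def
    by (intro linearI) (simp_all add: matrix_vector_right_distrib matrix_vector_mult_scaleR inner_add_right algebra_simps)
  have Nsym: "x \<bullet> N k y = y \<bullet> N k x" for k x y
    unfolding N_def using data_sym[of Phir \<sigma> x y]
    by (simp add: S_def inner_diff_right inner_commute)
  have Nq: "\<bar>x \<bullet> N k x\<bar> \<le> \<rho> * (norm x)^2" for k x
  proof -
    have q: "x \<bullet> N k x = (norm x)^2 - \<eta> * (x \<bullet> (S *v x)) - \<eta> * (Phi k \<bullet> x)^2"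
      unfolding N_def power2_norm_eq_inner by (simp add: inner_diff_right power2_eq_square inner_commute)
    have c1: "(Phi k \<bullet> x)^2 \<le> (norm x)^2"
    proof -
      have "\<bar>Phi k \<bullet> x\<bar> \<le> norm x" using Cauchy_Schwarz_ineq2[of "Phi k" x] cur_unit[of k] by simp
      from power_mono[OF this abs_ge_zero, of 2] show ?thesis by simp
    qed
    have c0: "0 \<le> (Phi k \<bullet> x)^2" by simp
    have h1: "\<eta> * (a * (norm x)^2) \<le> \<eta> * (x \<bullet> (S *v x))"
      using alb[of x] etapos by (intro mult_left_mono) auto
    have h2: "0 \<le> \<eta> * (Phi k \<bullet> x)^2" using etapos by simp
    have h3: "\<eta> * (x \<bullet> (S *v x)) \<le> \<eta> * (b * (norm x)^2)"
      using bub[of x] etapos by (intro mult_left_mono) auto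
    have h4: "\<eta> * (Phi k \<bullet> x)^2 \<le> \<eta> * (norm x)^2"
      using c1 etapos by (intro mult_left_mono) auto
    have e1: "(1 - \<eta> * a) * (norm x)^2 = (norm x)^2 - \<eta> * (a * (norm x)^2)" by (simp add: algebra_simps)
    have e2: "(1 - \<eta> * (b + 1)) * (norm x)^2 = (norm x)^2 - \<eta> * (b * (norm x)^2) - \<eta> * (norm x)^2"
      by (simp add: algebra_simps)
    have up: "x \<bullet> N k x \<le> (1 - \<eta> * a) * (norm x)^2"
      unfolding e1 q using h1 h2 by linarith
    have lo: "x \<bullet> N k x \<ge> (1 - \<eta> * (b + 1)) * (norm x)^2"
      unfolding e2 q using h3 h4 by linarith
    have nn: "0 \<le> (norm x)^2" by simp
    have "(1 - \<eta> * a) * (norm x)^2 \<le> \<rho> * (norm x)^2" unfolding \<rho>_def by (intro mult_right_mono) auto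
    moreover have "-((1 - \<eta> * (b + 1)) * (norm x)^2) \<le> \<rho> * (norm x)^2"
    proof -
      have "-((1 - \<eta> * (b + 1)) * (norm x)^2) = (\<eta> * (b + 1) - 1) * (norm x)^2" by (simp add: algebra_simps)
      also have "\<dots> \<le> \<rho> * (norm x)^2" unfolding \<rho>_def by (rule mult_right_mono) auto
      finally show ?thesis .
    qed
    ultimately show ?thesis using up lo by (simp add: abs_le_iff)
  qed
  have Nnorm: "norm (N k x) \<le> \<rho> * norm x" for k x
    by (rule sym_opnorm[OF Nlin Nsym Nq])
  have main: "\<forall>Th :: nat \<Rightarrow> real^7.
              (\<forall>k. Th (Suc k) = cl_step Phir yr \<sigma> (Phi k) (y k) (Th k)) \<longrightarrow>
              (\<forall>k. norm (Th k - \<Theta>) \<le> 1 * \<rho> ^ k * norm (Th 0 - \<Theta>))"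
  proof (intro allI impI)
    fix Th :: "nat \<Rightarrow> real^7" and k
    assume rec: "\<forall>k. Th (Suc k) = cl_step Phir yr \<sigma> (Phi k) (y k) (Th k)"
    have step: "Th (Suc k) - \<Theta> = N k (Th k - \<Theta>)" for k
    proof -
      have sm: "(\<Sum>m = 1..\<sigma>. (Th k \<bullet> Phir m - yr m) *\<^sub>R Phir m) = S *v (Th k - \<Theta>)"
        unfolding S_def data_mv
        by (intro sum.cong refl) (simp add: rec_out inner_diff_right inner_commute)
      have "Th (Suc k) = Th k - \<eta> *\<^sub>R (S *v (Th k - \<Theta>)) - \<eta> *\<^sub>R ((Th k \<bullet> Phi k - y k) *\<^sub>R Phi k)"
        using rec[rule_format, of k] unfolding cl_step_def Let_def S_def[symmetric] lr sm by simp
      also have "Th k \<bullet> Phi k - y k = Phi k \<bullet> (Th k - \<Theta>)"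
        by (simp add: cur_out inner_diff_right inner_commute)
      finally show ?thesis unfolding N_def by simp
    qed
    show "norm (Th k - \<Theta>) \<le> 1 * \<rho> ^ k * norm (Th 0 - \<Theta>)"
    proof (induction k)
      case 0 then show ?case by simp
    next
      case (Suc k)
      have "norm (Th (Suc k) - \<Theta>) \<le> \<rho> * norm (Th k - \<Theta>)" unfolding step by (rule Nnorm)
      also have "\<dots> \<le> \<rho> * (1 * \<rho> ^ k * norm (Th 0 - \<Theta>))"
        using Suc rpos by (intro mult_left_mono) auto
      finally show ?case by (simp add: mult.assoc)
    qed
  qed
  show ?thesis
    apply (rule exI[where x="1::real"])
    apply (rule exI[where x=\<rho>])
    using rpos rlt main by simp
qed

end
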